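(* Let $X^*\subset\mathbb{R}^n$ be a finite set of points and let $X\subset\mathbb{R}^n$ be obtained by perturbing $X^*$, so that each $\boldsymbol x\in X$ has a corresponding unperturbed point $\boldsymbol x^*\in X^*$ (with $g(X)$ and $g(X^* )$ listing values in corresponding order). Let $g\in\mathbb{R}[x_1,\ldots,x_n]$ be gradient-normalized with respect to $X$, i.e. $\|\mathfrak n_{\mathrm g}(g;X)\|=1$. Let $\delta=\max_{\boldsymbol x\in X}\|\boldsymbol x^*-\boldsymbol x\|$. Then $\|g(X)-g(X^* )\|\le\delta+o(\delta)$, where $o(\cdot)$ is Landau's little-o (as $\delta\to0$).
   Context: For a finite point set $Y=\{\boldsymbol y_1,\ldots,\boldsymbol y_N\}$ and a polynomial $h$, $h(Y)=(h(\boldsymbol y_1),\ldots,h(\boldsymbol y_N))^\top$. $\mathfrak n_{\mathrm g}(g;X)=\mathrm{vec}(\nabla g(X))\in\mathbb{R}^{|X|n}$, where $\nabla g(X)$ is the $|X|\times n$ matrix whose rows are the gradients of $g$ at the points of $X$; thus $\|\mathfrak n_{\mathrm g}(g;X)\|^2=\sum_{\boldsymbol x\in X}\|\nabla g(\boldsymbol x)\|^2$. Norms are Euclidean. *)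

theory Defs
  imports "HOL-Analysis.Analysis" "HOL-Library.Landau_Symbols"
begin

definition poly_fun :: "(real ^ 'n \<Rightarrow> real) \<Rightarrow> bool" where
  "poly_fun g \<longleftrightarrow> (\<exists>S :: ('n \<Rightarrow> nat) set. \<exists>c :: ('n \<Rightarrow> nat) \<Rightarrow> real.
      finite S \<and> (\<forall>x. g x = (\<Sum>\<alpha>\<in>S. c \<alpha> * (\<Prod>i\<in>UNIV. (x $ i) ^ (\<alpha> i)))))"

definition grad :: "(real ^ 'n \<Rightarrow> real) \<Rightarrow> real ^ 'n \<Rightarrow> real ^ 'n" where
  "grad g x = (THE G. (g has_derivative (\<lambda>h. G \<bullet> h)) (at x))"

end

theory Submission
  imports Defs
begin

lemma lin_repr: "linear (f::real^'n \<Rightarrow> real) \<Longrightarrow> \<exists>G. f = (\<lambda>h. G \<bullet> h)"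
  by (metis adjoint_clauses(2) real_inner_1_left)

lemma grad_ok:
  fixes f :: "real ^ 'n \<Rightarrow> real"
  assumes "f differentiable (at y)"
  shows "(f has_derivative (\<lambda>h. grad f y \<bullet> h)) (at y)"
proof -
  obtain f' where hd: "(f has_derivative f') (at y)" using assms differentiable_def by blast
  then have "linear f'" using has_derivative_linear by blast
  then obtain G where G: "f' = (\<lambda>h. G \<bullet> h)" using lin_repr by blast
  have "grad f y = G" unfolding grad_def
  proof (rule the_equality)
    show "(f has_derivative (\<lambda>h. G \<bullet> h)) (at y)" using hd G by simp
  next
    fix G' assume "(f has_derivative (\<lambda>h. G' \<bullet> h)) (at y)"
    then have "(\<lambda>h. G' \<bullet> h) = (\<lambda>h. G \<bullet> h)" using hd G has_derivative_unique by blast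
    then have "G' \<bullet> (G' - G) = G \<bullet> (G' - G)" by metis
    then have "(G' - G) \<bullet> (G' - G) = 0" by (simp add: inner_diff_left)
    then show "G' = G" by simp
  qed
  then show ?thesis using hd G by simp
qed

lemma poly_diff:
  assumes "poly_fun (g :: real ^ 'n \<Rightarrow> real)"
  shows "g differentiable (at y)"
proof -
  obtain S and c :: "('n \<Rightarrow> nat) \<Rightarrow> real" where S: "finite S"
    and geq: "\<And>x. g x = (\<Sum>\<alpha>\<in>S. c \<alpha> * (\<Prod>i\<in>UNIV. (x $ i) ^ (\<alpha> i)))"
    using assms unfolding poly_fun_def by blast
  have g: "g = (\<lambda>x. \<Sum>\<alpha>\<in>S. c \<alpha> * (\<Prod>i\<in>UNIV. (x $ i) ^ (\<alpha> i)))" using geq by auto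
  have "(\<lambda>x::real^'n. \<Prod>i\<in>UNIV. (x $ i) ^ (\<alpha> i)) differentiable (at y)" for \<alpha>
  proof -
    have "\<forall>i. \<exists>D. ((\<lambda>x::real^'n. (x $ i) ^ (\<alpha> i)) has_derivative D) (at y)"
    proof
      fix i
      have "(\<lambda>x::real^'n. (x $ i) ^ (\<alpha> i)) differentiable (at y)"
        by (intro differentiable_power bounded_linear_imp_differentiable bounded_linear_vec_nth)
      then show "\<exists>D. ((\<lambda>x::real^'n. (x $ i) ^ (\<alpha> i)) has_derivative D) (at y)"
        unfolding differentiable_def by blast
    qed
    then obtain D where "\<And>i. ((\<lambda>x::real^'n. (x $ i) ^ (\<alpha> i)) has_derivative D i) (at y)" by metis
    then show ?thesis unfolding differentiable_def using has_derivative_prod[where f="\<lambda>i x. (x $ i) ^ (\<alpha> i)" and f'=D and I=UNIV and x=y and S=UNIV] by blast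
  qed
  then show ?thesis unfolding g using S by (intro differentiable_sum ballI differentiable_mult differentiable_const) auto
qed

theorem proposition3:
  fixes g :: "real ^ 'n \<Rightarrow> real"
    and x :: "nat \<Rightarrow> real ^ 'n"
    and N :: nat
  assumes "poly_fun g"
    and "inj_on x {..<N}"
    and "(\<Sum>i<N. (norm (grad g (x i)))\<^sup>2) = 1"
  shows "\<exists>r :: real \<Rightarrow> real. r \<in> o[at_right 0](\<lambda>d. d) \<and>
           (\<forall>xs :: nat \<Rightarrow> real ^ 'n. inj_on xs {..<N} \<longrightarrow>
              (let \<delta> = Max ((\<lambda>i. norm (xs i - x i)) ` {..<N}) in
                 sqrt (\<Sum>i<N. (g (x i) - g (xs i))\<^sup>2) \<le> \<delta> + r \<delta>))"
proof -
  define G where "G i = grad g (x i)" for i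
  define R where "R i h = \<bar>g (x i + h) - g (x i) - G i \<bullet> h\<bar>" for i h
  define E where "E i d = (SUP h\<in>cball 0 d. R i h)" for i d
  define r where "r d = (\<Sum>i<N. E i d)" for d
  have N: "N \<ge> 1" using assms(3) by (cases N) auto
  have hd: "(g has_derivative (\<lambda>h. G i \<bullet> h)) (at (x i))" for i
    unfolding G_def by (intro grad_ok poly_diff assms(1))
  have contg: "continuous_on UNIV g"
    using poly_diff[OF assms(1)] by (meson continuous_at_imp_continuous_on differentiable_imp_continuous_within)
  have contR: "continuous_on UNIV (R i)" for i
    unfolding R_def
    by (intro continuous_intros continuous_on_compose2[OF contg]) auto
  have bdd: "bdd_above (R i ` cball 0 d)" for i d
    by (intro bounded_imp_bdd_above compact_imp_bounded compact_continuous_image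
        continuous_on_subset[OF contR]) auto
  have Rle: "R i h \<le> E i d" if "norm h \<le> d" for i h d
    unfolding E_def using that by (intro cSUP_upper bdd) auto
  have E0: "0 \<le> E i d" if "0 \<le> d" for i d
    using Rle[of 0 d i] that by (simp add: R_def)
  have small: "r \<in> o[at_right 0](\<lambda>d. d)"
  proof (rule landau_o.smallI)
    fix c :: real assume c: "c > 0"
    define e where "e = c / N"
    have e: "e > 0" using c N by (simp add: e_def)
    have "\<forall>i\<in>{..<N}. eventually (\<lambda>d. E i d \<le> e * d) (at_right 0)"
    proof
      fix i
      obtain \<eta> where eta: "\<eta> > 0" and
        H: "\<And>y. norm (y - x i) < \<eta> \<Longrightarrow> norm (g y - g (x i) - G i \<bullet> (y - x i)) \<le> e * norm (y - x i)"
        using hd[of i] e unfolding has_derivative_at_alt by blast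
      show "eventually (\<lambda>d. E i d \<le> e * d) (at_right 0)"
        using eventually_at_right_real[OF eta]
      proof (rule eventually_mono)
        fix d assume d: "d \<in> {0<..<\<eta>}"
        show "E i d \<le> e * d" unfolding E_def
        proof (rule cSUP_least)
          show "cball 0 d \<noteq> {}" using d by auto
        next
          fix h :: "real^'n" assume "h \<in> cball 0 d"
          then have hn: "norm h \<le> d" by auto
          then have "R i h \<le> e * norm h" using H[of "x i + h"] d by (simp add: R_def)
          also have "\<dots> \<le> e * d" using hn e by simp
          finally show "R i h \<le> e * d" .
        qed
      qed
    qed
    then have ev: "eventually (\<lambda>d. \<forall>i\<in>{..<N}. E i d \<le> e * d) (at_right 0)"
      by (intro eventually_ball_finite) auto
    show "eventually (\<lambda>d. norm (r d) \<le> c * norm d) (at_right 0)"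
      using eventually_conj[OF ev eventually_at_right_less]
    proof (rule eventually_mono)
      fix d :: real assume d: "(\<forall>i\<in>{..<N}. E i d \<le> e * d) \<and> 0 < d"
      have r0: "0 \<le> r d" unfolding r_def using d E0 by (intro sum_nonneg) auto
      have "r d \<le> (\<Sum>i<N. e * d)" unfolding r_def using d by (intro sum_mono) auto
      also have "\<dots> = c * d" using N by (simp add: e_def)
      finally show "norm (r d) \<le> c * norm d" using r0 d by simp
    qed
  qed
  have main: "sqrt (\<Sum>i<N. (g (x i) - g (xs i))\<^sup>2) \<le> \<delta> + r \<delta>"
    if "\<delta> = Max ((\<lambda>i. norm (xs i - x i)) ` {..<N})" for xs \<delta>
  proof -
    have dle: "norm (xs i - x i) \<le> \<delta>" if "i < N" for i
      unfolding \<open>\<delta> = _\<close> using that by (intro Max_ge) auto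
    have d0: "0 \<le> \<delta>" using dle[of 0] N by (meson norm_ge_zero order_trans less_le_trans zero_less_one)
    have pt: "\<bar>g (x i) - g (xs i)\<bar> \<le> norm (G i) * \<delta> + E i \<delta>" if "i < N" for i
    proof -
      define h where "h = xs i - x i"
      have xs: "xs i = x i + h" by (simp add: h_def)
      have hn: "norm h \<le> \<delta>" using dle[OF that] by (simp add: h_def)
      have "\<bar>g (x i) - g (xs i)\<bar> \<le> \<bar>G i \<bullet> h\<bar> + R i h" unfolding xs R_def by linarith
      also have "\<dots> \<le> norm (G i) * norm h + E i \<delta>"
        using Cauchy_Schwarz_ineq2[of "G i" h] Rle[OF hn, of i] by linarith
      also have "\<dots> \<le> norm (G i) * \<delta> + E i \<delta>" using hn by (simp add: mult_left_mono)
      finally show ?thesis .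
    qed
    have "sqrt (\<Sum>i<N. (g (x i) - g (xs i))\<^sup>2) = L2_set (\<lambda>i. \<bar>g (x i) - g (xs i)\<bar>) {..<N}"
      by (simp add: L2_set_def)
    also have "\<dots> \<le> L2_set (\<lambda>i. norm (G i) * \<delta> + E i \<delta>) {..<N}"
      using pt by (intro L2_set_mono) auto
    also have "\<dots> \<le> L2_set (\<lambda>i. norm (G i) * \<delta>) {..<N} + L2_set (\<lambda>i. E i \<delta>) {..<N}"
      by (rule L2_set_triangle_ineq)
    also have "L2_set (\<lambda>i. norm (G i) * \<delta>) {..<N} = L2_set (\<lambda>i. norm (G i)) {..<N} * \<delta>"
      using d0 by (simp add: L2_set_left_distrib)
    also have "L2_set (\<lambda>i. norm (G i)) {..<N} = 1"
      using assms(3) by (simp add: L2_set_def G_def)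
    also have "L2_set (\<lambda>i. E i \<delta>) {..<N} \<le> r \<delta>"
      unfolding r_def using E0 d0 by (intro L2_set_le_sum) auto
    finally show ?thesis by simp
  qed
  show ?thesis using small main by (auto simp: Let_def)
qed

end
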